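(* Fix an integer $r>0$ and let $\preccurlyeq$ be the relation on $\mathcal A$ defined below. Then: (a) $\preccurlyeq$ is a preorder (reflexive and transitive) on $\mathcal A$; (b) for $\mathbf a,\mathbf b\in\mathcal A$, both $\mathbf a\preccurlyeq\mathbf b$ and $\mathbf b\preccurlyeq\mathbf a$ hold if and only if $\dim\mathbf a=\dim\mathbf b$ and $a_i=b_i$ for all $0\le i\le\dim\mathbf a-r$; (c) for $0\le m<\infty$, an element $\mathbf b\in\mathcal A_m$ is a least element of $\mathcal A_m$ if and only if $\dim\mathbf b=m$ and $b_i=2$ for $0\le i\le m-r$; and $\mathbf b\in\mathcal A_\infty$ is a least element of $\mathcal A_\infty$ if and only if $b_i=2$ for all $i\ge0$.
   Context: Let $\mathcal A$ be the set of sequences $\mathbf a=(a_n)_{n\in\mathbb N}$ of nonnegative integers with $a_0>0$ such that for every $n$, if $a_n\le1$ then $a_i=0$ for all $i>n$. For $\mathbf a\in\mathcal A$ put $\dim\mathbf a=\sup\{n: a_n>0\}\in\mathbb N\cup\{\infty\}$; for $0\le m<\infty$ let $\mathcal A_m=\{\mathbf a\in\mathcal A:\dim\mathbf a\ge m\}$ and $\mathcal A_\infty=\bigcap_m\mathcal A_m$. For fixed $r>0$, define $\mathbf a\preccurlyeq\mathbf b$ iff $\dim\mathbf a\le\dim\mathbf b$ and, for every $n\in\mathbb N$, $a_n>b_n$ implies $\dim\mathbf a<n+r$ (where $\infty<n+r$ is false). An element $x$ of a subset $B$ is a least element of $B$ if $x\preccurlyeq b$ for all $b\in B$. *)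

theory Defs
  imports Main "HOL-Library.Extended_Nat"
begin

definition seqA :: "(nat \<Rightarrow> nat) set" where
  "seqA = {a. a 0 > 0 \<and> (\<forall>n. a n \<le> 1 \<longrightarrow> (\<forall>i>n. a i = 0))}"

definition dimA :: "(nat \<Rightarrow> nat) \<Rightarrow> enat" where
  "dimA a = Sup (enat ` {n. a n > 0})"

definition seqA_m :: "nat \<Rightarrow> (nat \<Rightarrow> nat) set" where
  "seqA_m m = {a \<in> seqA. dimA a \<ge> enat m}"

definition seqA_inf :: "(nat \<Rightarrow> nat) set" where
  "seqA_inf = (\<Inter>m. seqA_m m)"

text \<open>The relation a \<preccurlyeq> b for parameter r; note infinity < enat k is false.\<close>
definition precA :: "nat \<Rightarrow> (nat \<Rightarrow> nat) \<Rightarrow> (nat \<Rightarrow> nat) \<Rightarrow> bool" where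
  "precA r a b \<longleftrightarrow> dimA a \<le> dimA b \<and> (\<forall>n. a n > b n \<longrightarrow> dimA a < enat (n + r))"

definition precA_rel :: "nat \<Rightarrow> ((nat \<Rightarrow> nat) \<times> (nat \<Rightarrow> nat)) set" where
  "precA_rel r = {(a, b). a \<in> seqA \<and> b \<in> seqA \<and> precA r a b}"

definition least_elem :: "nat \<Rightarrow> (nat \<Rightarrow> nat) set \<Rightarrow> (nat \<Rightarrow> nat) \<Rightarrow> bool" where
  "least_elem r B x \<longleftrightarrow> x \<in> B \<and> (\<forall>b\<in>B. precA r x b)"

end

theory Submission
  imports Defs
begin

lemma dim_le: assumes "a \<in> seqA" "a n \<le> 1" shows "dimA a \<le> enat n"
proof -
  have z: "\<forall>i>n. a i = 0" using assms unfolding seqA_def by auto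
  have "i \<le> n" if "a i > 0" for i
  proof (rule ccontr)
    assume "\<not> i \<le> n"
    hence "i > n" by simp
    with z have "a i = 0" by blast
    with that show False by simp
  qed
  thus ?thesis unfolding dimA_def by (intro Sup_least) auto
qed

lemma dim_ge: assumes "a n > 0" shows "enat n \<le> dimA a"
  unfolding dimA_def using assms by (auto intro!: Sup_upper)

lemma all_le_inf: assumes "\<And>n. enat n \<le> x" shows "x = \<infinity>"
proof (cases x)
  case (enat k) then show ?thesis using assms[of "Suc k"] by simp
qed simp

lemma inf_dim: "b \<in> seqA_inf \<Longrightarrow> b \<in> seqA \<and> dimA b = \<infinity>"
  unfolding seqA_inf_def seqA_m_def by (auto intro: all_le_inf)

lemma witness:
  fixes m :: nat
  defines "c \<equiv> (\<lambda>i::nat. if i < m then 2 else if i = m then 1 else 0::nat)"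
  shows "c \<in> seqA_m m" "dimA c = enat m" "\<And>i. i < m \<Longrightarrow> c i = 2"
proof -
  have cA: "c \<in> seqA" unfolding seqA_def c_def by auto
  have "dimA c \<le> enat m" using dim_le[OF cA, of m] unfolding c_def by simp
  moreover have "enat m \<le> dimA c" using dim_ge[of c m] unfolding c_def by simp
  ultimately show d: "dimA c = enat m" by simp
  show "c \<in> seqA_m m" using cA d unfolding seqA_m_def by simp
  show "\<And>i. i < m \<Longrightarrow> c i = 2" unfolding c_def by simp
qed

lemma const2: "(\<lambda>_. 2::nat) \<in> seqA_inf"
proof -
  have A: "(\<lambda>_. 2::nat) \<in> seqA" unfolding seqA_def by simp
  have "dimA (\<lambda>_. 2::nat) = \<infinity>" by (rule all_le_inf, rule dim_ge) simp
  thus ?thesis using A unfolding seqA_inf_def seqA_m_def by simp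
qed

theorem proposition1p3:
  fixes r :: nat
  assumes "r > 0"
  shows "preorder_on seqA (precA_rel r)
    \<and> (\<forall>a\<in>seqA. \<forall>b\<in>seqA.
           (precA r a b \<and> precA r b a \<longleftrightarrow>
            dimA a = dimA b \<and> (\<forall>i. enat (i + r) \<le> dimA a \<longrightarrow> a i = b i)))
    \<and> (\<forall>m. \<forall>b\<in>seqA_m m.
           (least_elem r (seqA_m m) b \<longleftrightarrow>
            dimA b = enat m \<and> (\<forall>i. i + r \<le> m \<longrightarrow> b i = 2)))
    \<and> (\<forall>b\<in>seqA_inf. (least_elem r seqA_inf b \<longleftrightarrow> (\<forall>i. b i = 2)))"
proof (intro conjI ballI allI)
  show "preorder_on seqA (precA_rel r)"
  proof -
    have t: "precA r a c" if "precA r a b" "precA r b c" for a b c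
    proof -
      have "dimA a \<le> dimA c" using that unfolding precA_def by (meson order_trans)
      moreover have "dimA a < enat (n + r)" if "a n > c n" for n
      proof (cases "a n > b n")
        case True thus ?thesis using \<open>precA r a b\<close> unfolding precA_def by auto
      next
        case False hence "b n > c n" using that by simp
        thus ?thesis using \<open>precA r a b\<close> \<open>precA r b c\<close> unfolding precA_def
          by (meson le_less_trans)
      qed
      ultimately show ?thesis unfolding precA_def by auto
    qed
    have r: "precA r a a" for a unfolding precA_def by simp
    show ?thesis unfolding preorder_on_def
    proof (intro conjI)
      show "precA_rel r \<subseteq> seqA \<times> seqA" unfolding precA_rel_def by auto
      show "refl_on seqA (precA_rel r)" unfolding refl_on_def precA_rel_def using r by auto
      show "trans (precA_rel r)"
      proof (rule transI)
        fix x y z assume "(x, y) \<in> precA_rel r" "(y, z) \<in> precA_rel r"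
        thus "(x, z) \<in> precA_rel r" unfolding precA_rel_def using t[of x y z] by simp
      qed
    qed
  qed
next
  fix a b assume "a \<in> seqA" "b \<in> seqA"
  show "(precA r a b \<and> precA r b a \<longleftrightarrow>
            dimA a = dimA b \<and> (\<forall>i. enat (i + r) \<le> dimA a \<longrightarrow> a i = b i))"
  proof
    assume "precA r a b \<and> precA r b a"
    hence d: "dimA a = dimA b" and e: "\<forall>n. a n > b n \<longrightarrow> dimA a < enat (n + r)"
      "\<forall>n. b n > a n \<longrightarrow> dimA b < enat (n + r)" unfolding precA_def by auto
    have "a i = b i" if "enat (i + r) \<le> dimA a" for i
    proof (rule ccontr)
      assume "a i \<noteq> b i"
      hence "a i > b i \<or> b i > a i" by arith
      thus False using d that e by (metis leD)
    qed
    hence "\<forall>i. enat (i + r) \<le> dimA a \<longrightarrow> a i = b i" by blast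
    with d show "dimA a = dimA b \<and> (\<forall>i. enat (i + r) \<le> dimA a \<longrightarrow> a i = b i)" by simp
  next
    assume h: "dimA a = dimA b \<and> (\<forall>i. enat (i + r) \<le> dimA a \<longrightarrow> a i = b i)"
    show "precA r a b \<and> precA r b a" unfolding precA_def
    proof (intro conjI allI impI)
      fix n assume "a n > b n" thus "dimA a < enat (n + r)" using h by (metis less_irrefl not_le)
    next
      fix n assume "b n > a n" thus "dimA b < enat (n + r)" using h by (metis less_irrefl not_le)
    qed (use h in auto)
  qed
next
  fix m b assume bm: "b \<in> seqA_m m"
  hence bA: "b \<in> seqA" and bd: "enat m \<le> dimA b" unfolding seqA_m_def by auto
  show "least_elem r (seqA_m m) b \<longleftrightarrow> dimA b = enat m \<and> (\<forall>i. i + r \<le> m \<longrightarrow> b i = 2)"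
  proof
    assume L: "least_elem r (seqA_m m) b"
    define c where "c \<equiv> (\<lambda>i::nat. if i < m then 2 else if i = m then 1 else 0::nat)"
    note w = witness[where m=m, folded c_def]
    have p: "precA r b c" using L w(1) unfolding least_elem_def by auto
    hence d: "dimA b = enat m" using bd w(2) unfolding precA_def by auto
    have "b i = 2" if "i + r \<le> m" for i
    proof -
      have im: "i < m" using that assms by simp
      have "\<not> b i > c i" using p d that unfolding precA_def by auto
      hence "b i \<le> 2" using im by (simp add: c_def)
      moreover have "\<not> b i \<le> 1" using dim_le[OF bA, of i] d im by auto
      ultimately show ?thesis by simp
    qed
    thus "dimA b = enat m \<and> (\<forall>i. i + r \<le> m \<longrightarrow> b i = 2)" using d by simp
  next
    assume R: "dimA b = enat m \<and> (\<forall>i. i + r \<le> m \<longrightarrow> b i = 2)"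
    have "precA r b c" if c: "c \<in> seqA_m m" for c
    proof -
      have cA: "c \<in> seqA" and cd: "enat m \<le> dimA c" using c unfolding seqA_m_def by auto
      have "dimA b < enat (n + r)" if "b n > c n" for n
      proof (rule ccontr)
        assume "\<not> dimA b < enat (n + r)"
        hence nr: "n + r \<le> m" using R by simp
        hence "c n \<le> 1" using R that by simp
        hence "dimA c \<le> enat n" by (rule dim_le[OF cA])
        hence "enat m \<le> enat n" using cd by (rule order_trans[rotated])
        thus False using nr assms by simp
      qed
      thus ?thesis using R cd unfolding precA_def by simp
    qed
    thus "least_elem r (seqA_m m) b" using bm unfolding least_elem_def by blast
  qed
next
  fix b assume bi: "b \<in> seqA_inf"
  note bb = inf_dim[OF bi]
  show "least_elem r seqA_inf b \<longleftrightarrow> (\<forall>i. b i = 2)"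
  proof
    assume L: "least_elem r seqA_inf b"
    hence p: "precA r b (\<lambda>_. 2)" using const2 unfolding least_elem_def by auto
    show "\<forall>i. b i = 2"
    proof
      fix i
      have "\<not> b i > 2"
      proof
        assume "b i > 2"
        hence "dimA b < enat (i + r)" using p unfolding precA_def by blast
        thus False using bb by simp
      qed
      hence "b i \<le> 2" by simp
      moreover have "\<not> b i \<le> 1" using dim_le[of b i] bb by auto
      ultimately show "b i = 2" by simp
    qed
  next
    assume "\<forall>i. b i = 2"
    hence "b = (\<lambda>_. 2)" by auto
    moreover have "precA r (\<lambda>_. 2) c" if cI: "c \<in> seqA_inf" for c
    proof -
      note cc = inf_dim[OF cI]
      have "dimA (\<lambda>_. 2::nat) \<le> dimA c" using cc by simp
      moreover have "\<not> 2 > c n" for n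
      proof
        assume "2 > c n"
        hence "c n \<le> 1" by simp
        hence "dimA c \<le> enat n" using dim_le cc by blast
        thus False using cc by simp
      qed
      ultimately show ?thesis unfolding precA_def by blast
    qed
    ultimately show "least_elem r seqA_inf b" using bi unfolding least_elem_def by blast
  qed
qed

end
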